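(* Let $n,m\ge1$, $c_1,\dots,c_n>0$, $T>0$, $\epsilon>0$, constant $r_1,\dots,r_m>0$, $\kappa_{ij}\ge0$. Let $\mu_j(q_j)=0$ for $q_j\le c_j$ and $\mu_j(q_j)=T(1-c_j/q_j)$ for $q_j>c_j$, and $\delta_{ij}(\mu)=e^{-(\kappa_{ij}+\mu_j)/\epsilon}/\sum_k e^{-(\kappa_{ik}+\mu_k)/\epsilon}$. Consider the dynamics $$\dot q_j=\sum_{i=1}^m x_{ij}-\frac{q_j}{T},\quad \mu_j=\mu_j(q_j),\quad x_{ij}=r_i\delta_{ij}(\mu),$$ which has a unique equilibrium point $(X^*,q^*,\mu^* )$ (i.e. the unique triple with $\mu^*_j=\mu_j(q^*_j)$, $x^*_{ij}=r_i\delta_{ij}(\mu^* )$, $\sum_ix^*_{ij}=q^*_j/T$). Then any trajectory $(q(t),X(t),\mu(t))$ of these dynamics, with $q(t)$ defined for $t\ge0$ from an arbitrary initial condition, $\mu(t)=\mu(q(t))$, $X(t)=(r_i\delta_{ij}(\mu(t)))$, converges as $t\to\infty$ to $(X^*,q^*,\mu^* )$.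
   Context: The equilibrium coincides with the unique optimum $(X^*,q^* )$ of $\min\sum\kappa_{ij}x_{ij}+\sum_j\beta_j(q_j)+\epsilon\sum x_{ij}\log(x_{ij}/r_i)$ subject to $x_{ij}\ge0$, $\sum_jx_{ij}=r_i$, $\sum_ix_{ij}=q_j/T$, where $\beta_j(q)=\int_0^q[1-c_j/\sigma]^+d\sigma$, together with the optimal Lagrange multiplier $\mu^*$. *)

theory Defs
  imports "HOL-Analysis.Analysis"
begin

definition price :: "real \<Rightarrow> real \<Rightarrow> real \<Rightarrow> real" where
  "price T c q = (if q \<le> c then 0 else T * (1 - c / q))"

definition logit :: "nat \<Rightarrow> real \<Rightarrow> (nat \<Rightarrow> nat \<Rightarrow> real) \<Rightarrow> (nat \<Rightarrow> real) \<Rightarrow> nat \<Rightarrow> nat \<Rightarrow> real" where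
  "logit n eps kappa mu i j =
     exp (- (kappa i j + mu j) / eps) / (\<Sum>k<n. exp (- (kappa i k + mu k) / eps))"

end

theory Submission
  imports Defs
begin


definition sig :: "real \<Rightarrow> real \<Rightarrow> real" where
  "sig e d = (if e > 0 then d else if e < 0 then - d else \<bar>d\<bar>)"

lemma sig_add: "sig e (x + y) \<le> sig e x + sig e y"
  by (auto simp: sig_def)

lemma sig_scale: "r \<ge> 0 \<Longrightarrow> sig e (r * x) = r * sig e x"
  by (auto simp: sig_def abs_mult)

lemma sig_sum: "finite I \<Longrightarrow> sig e (\<Sum>i\<in>I. f i) \<le> (\<Sum>i\<in>I. sig e (f i))"
proof (induction I rule: finite_induct)
  case empty then show ?case by (simp add: sig_def)
next
  case (insert x F)
  then show ?case using sig_add[of e "f x" "sum f F"] by simp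
qed

lemma sig_shift: "sig e (d - e / T) = sig e d - \<bar>e\<bar> / T"
  by (auto simp: sig_def)

lemma sig_le1: "(e \<le> 0 \<Longrightarrow> d \<ge> 0) \<Longrightarrow> sig e d \<le> d"
  by (auto simp: sig_def)

lemma sig_le2: "(e \<ge> 0 \<Longrightarrow> d \<le> 0) \<Longrightarrow> sig e d \<le> - d"
  by (auto simp: sig_def)

lemma softmax_sig:
  fixes a b e :: "nat \<Rightarrow> real"
  assumes apos: "\<forall>j<n. a j > 0" and bpos: "\<forall>j<n. b j > 0"
    and h1: "\<forall>j<n. e j \<le> 0 \<longrightarrow> b j \<le> a j" and h2: "\<forall>j<n. e j \<ge> 0 \<longrightarrow> a j \<le> b j"
  shows "(\<Sum>j<n. sig (e j) (a j / (\<Sum>k<n. a k) - b j / (\<Sum>k<n. b k))) \<le> 0"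
proof (cases "n = 0")
  case True then show ?thesis by simp
next
  case False
  define SA where "SA = (\<Sum>k<n. a k)"
  define SB where "SB = (\<Sum>k<n. b k)"
  have SA: "SA > 0" unfolding SA_def using False apos by (intro sum_pos) auto
  have SB: "SB > 0" unfolding SB_def using False bpos by (intro sum_pos) auto
  have tot: "(\<Sum>j<n. a j / SA - b j / SB) = 0"
    using SA SB by (simp add: sum_subtractf flip: sum_divide_distrib add: SA_def SB_def)
  show ?thesis
  proof (cases "SA \<le> SB")
    case True
    have "(\<Sum>j<n. sig (e j) (a j / SA - b j / SB)) \<le> (\<Sum>j<n. a j / SA - b j / SB)"
    proof (rule sum_mono, rule sig_le1)
      fix j assume j: "j \<in> {..<n}" and "e j \<le> 0"
      then have "b j \<le> a j" using h1 by auto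
      moreover have "b j / SB \<le> b j / SA" using bpos j SA True
        by (intro divide_left_mono) auto
      ultimately have "b j / SA \<le> a j / SA" using SA by (simp add: divide_right_mono)
      then show "0 \<le> a j / SA - b j / SB" using \<open>b j / SB \<le> b j / SA\<close> by linarith
    qed
    then show ?thesis using tot by (simp add: SA_def SB_def)
  next
    case False
    have "(\<Sum>j<n. sig (e j) (a j / SA - b j / SB)) \<le> (\<Sum>j<n. - (a j / SA - b j / SB))"
    proof (rule sum_mono, rule sig_le2)
      fix j assume j: "j \<in> {..<n}" and "e j \<ge> 0"
      then have "a j \<le> b j" using h2 by auto
      moreover have "b j / SA \<le> b j / SB" using bpos j SB False
        by (intro divide_left_mono) auto
      ultimately have "a j / SA \<le> b j / SA" using SA by (simp add: divide_right_mono)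
      then show "a j / SA - b j / SB \<le> 0" using \<open>b j / SA \<le> b j / SB\<close> by linarith
    qed
    also have "\<dots> = 0" using tot by (simp add: sum_negf sum_subtractf)
    finally show ?thesis by (simp add: SA_def SB_def)
  qed
qed

lemma price_mono:
  assumes "c > 0" "T > 0" "x \<le> y"
  shows "price T c x \<le> price T c y"
proof -
  have "c / y \<le> c / x" if "c < x" using that assms by (intro divide_left_mono) auto
  moreover have "c / y < 1" if "c < y" using that assms by auto
  ultimately show ?thesis using assms by (auto simp: price_def)
qed

lemma price_alt:
  assumes "c > 0"
  shows "price T c x = T * (1 - c / max x c)"
  using assms by (auto simp: price_def max_def)

lemma right_mono:
  fixes h :: "real \<Rightarrow> real"
  assumes ab: "a \<le> b" and cont: "continuous_on {a..b} h"
    and loc: "\<forall>t\<in>{a..<b}. \<forall>\<epsilon>>0. \<exists>\<delta>>0. \<forall>s. t < s \<and> s < t + \<delta> \<longrightarrow> h s \<le> h t + \<epsilon> * (s - t)"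
  shows "h b \<le> h a"
proof -
  have main: "h b \<le> h a + \<epsilon> * (b - a)" if ep: "\<epsilon> > 0" for \<epsilon>
  proof -
    define g where "g u = h u - h a - \<epsilon> * (u - a)" for u
    define S where "S = {t\<in>{a..b}. \<forall>u\<in>{a..t}. g u \<le> 0}"
    have aS: "a \<in> S" using ab by (auto simp: S_def g_def)
    have bdd: "bdd_above S" unfolding S_def by (rule bdd_aboveI[of _ b]) auto
    define s where "s = Sup S"
    have as: "a \<le> s" unfolding s_def using aS bdd by (rule cSup_upper)
    have sb: "s \<le> b" unfolding s_def using aS by (intro cSup_least) (auto simp: S_def)
    have below: "g u \<le> 0" if "a \<le> u" "u < s" for u
    proof -
      obtain t where "t \<in> S" "u < t" using \<open>u < s\<close> less_cSup_iff[of S u] aS bdd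
        unfolding s_def by auto
      then show ?thesis using that by (auto simp: S_def)
    qed
    have gcont: "continuous_on {a..b} g" unfolding g_def
      by (intro continuous_intros cont)
    have gs: "g s \<le> 0"
    proof (cases "a = s")
      case True then show ?thesis by (simp add: g_def)
    next
      case False
      then have "a < s" using as by simp
      have "(g \<longlongrightarrow> g s) (at s within {a..b})"
        using gcont as sb by (simp add: continuous_on_def)
      then have lim: "(g \<longlongrightarrow> g s) (at s within {a..<s})"
        by (rule tendsto_within_subset) (use sb in auto)
      have nb: "at s within {a..<s} \<noteq> bot"
        using \<open>a < s\<close> by (simp add: at_within_eq_bot_iff closure_atLeastLessThan)
      show ?thesis
        by (rule tendsto_upperbound[OF lim _ nb])
           (auto simp: eventually_at_filter below)
    qed
    have sS: "\<forall>u\<in>{a..s}. g u \<le> 0"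
    proof
      fix u assume "u \<in> {a..s}"
      then show "g u \<le> 0" using below[of u] gs by (cases "u = s") auto
    qed
    show ?thesis
    proof (cases "s < b")
      case True
      have sab: "s \<in> {a..<b}" using as True by simp
      have "\<exists>\<delta>>0. \<forall>x. s < x \<and> x < s + \<delta> \<longrightarrow> h x \<le> h s + \<epsilon> * (x - s)"
        using loc sab ep by blast
      then obtain \<delta> where dp: "\<delta> > 0" and d: "\<forall>x. s < x \<and> x < s + \<delta> \<longrightarrow> h x \<le> h s + \<epsilon> * (x - s)"
        by blast
      define t' where "t' = min (s + \<delta>/2) b"
      have "t' \<in> S" unfolding S_def
      proof (intro CollectI conjI ballI)
        show "t' \<in> {a..b}" using as True dp unfolding t'_def by simp
        fix u assume u: "u \<in> {a..t'}"
        show "g u \<le> 0"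
        proof (cases "u \<le> s")
          case True then show ?thesis using sS u by auto
        next
          case False
          have "u \<le> t'" using u by simp
          also have "t' \<le> s + \<delta>/2" by (simp add: t'_def)
          finally have "u < s + \<delta>" using dp by simp
          then have "h u \<le> h s + \<epsilon> * (u - s)" using d False by simp
          then have "g u \<le> g s" by (simp add: g_def algebra_simps)
          then show ?thesis using gs by simp
        qed
      qed
      then have "t' \<le> s" unfolding s_def using bdd by (rule cSup_upper)
      moreover have "s < t'" using True dp unfolding t'_def by simp
      ultimately show ?thesis by simp
    next
      case False
      then have "s = b" using sb by simp
      then have "g b \<le> 0" using gs by simp
      then show ?thesis by (simp add: g_def)
    qed
  qed
  show ?thesis
  proof (rule ccontr)
    assume "\<not> ?thesis"
    then have pos: "h b - h a > 0" by simp
    then have "a < b" using ab by (cases "a = b") auto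
    define \<epsilon> where "\<epsilon> = (h b - h a) / (2 * (b - a))"
    have "\<epsilon> > 0" using pos \<open>a < b\<close> by (simp add: \<epsilon>_def)
    have e2: "\<epsilon> * (b - a) = (h b - h a) / 2" using \<open>a < b\<close> by (simp add: \<epsilon>_def field_simps)
    from main[OF \<open>\<epsilon> > 0\<close>] have "h b - h a \<le> (h b - h a) / 2"
      using e2 by linarith
    then show False using pos by simp
  qed
qed

lemma abs_right_deriv:
  fixes f :: "real \<Rightarrow> real"
  assumes d: "(f has_real_derivative f') (at t within {t..})"
  shows "((\<lambda>s. \<bar>f s\<bar>) has_real_derivative sig (f t) f') (at t within {t..})"
proof -
  have Q: "((\<lambda>y. (f y - f t) / (y - t)) \<longlongrightarrow> f') (at t within {t..})"
    using d by (simp add: has_field_derivative_iff)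
  have fl: "(f \<longlongrightarrow> f t) (at t within {t..})"
    using DERIV_continuous[OF d] by (simp add: continuous_within)
  have gt: "eventually (\<lambda>y. y > t) (at t within {t..})"
    by (auto simp: eventually_at_filter)
  show ?thesis unfolding has_field_derivative_iff
  proof (cases "f t > 0")
    case True
    have "eventually (\<lambda>y. f y > 0) (at t within {t..})" using order_tendstoD(1)[OF fl True] .
    then have "eventually (\<lambda>y. (f y - f t) / (y - t) = (\<bar>f y\<bar> - \<bar>f t\<bar>) / (y - t)) (at t within {t..})"
      by eventually_elim (use True in auto)
    then show "((\<lambda>y. (\<bar>f y\<bar> - \<bar>f t\<bar>) / (y - t)) \<longlongrightarrow> sig (f t) f') (at t within {t..})"
      using Lim_transform_eventually[OF Q] True by (simp add: sig_def)
  next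
    case False
    show "((\<lambda>y. (\<bar>f y\<bar> - \<bar>f t\<bar>) / (y - t)) \<longlongrightarrow> sig (f t) f') (at t within {t..})"
    proof (cases "f t < 0")
      case True
      have "eventually (\<lambda>y. f y < 0) (at t within {t..})" using order_tendstoD(2)[OF fl True] .
      then have "eventually (\<lambda>y. - ((f y - f t) / (y - t)) = (\<bar>f y\<bar> - \<bar>f t\<bar>) / (y - t)) (at t within {t..})"
        by eventually_elim (use True in \<open>auto simp: minus_divide_left\<close>)
      then show ?thesis
        using Lim_transform_eventually[OF tendsto_minus[OF Q]] True by (simp add: sig_def)
    next
      case False
      with \<open>\<not> f t > 0\<close> have z: "f t = 0" by simp
      have "eventually (\<lambda>y. \<bar>(f y - f t) / (y - t)\<bar> = (\<bar>f y\<bar> - \<bar>f t\<bar>) / (y - t)) (at t within {t..})"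
        using gt by eventually_elim (use z in auto)
      then show ?thesis
        using Lim_transform_eventually[OF tendsto_rabs[OF Q]] z by (simp add: sig_def)
    qed
  qed
qed

lemma deriv_loc:
  fixes h :: "real \<Rightarrow> real"
  assumes d: "(h has_real_derivative D) (at t within {t..})" and D: "D \<le> 0" and ep: "\<epsilon> > 0"
  shows "\<exists>\<delta>>0. \<forall>s. t < s \<and> s < t + \<delta> \<longrightarrow> h s \<le> h t + \<epsilon> * (s - t)"
proof -
  have Q: "((\<lambda>y. (h y - h t) / (y - t)) \<longlongrightarrow> D) (at t within {t..})"
    using d by (simp add: has_field_derivative_iff)
  have "eventually (\<lambda>y. (h y - h t) / (y - t) < D + \<epsilon>) (at t within {t..})"
    using order_tendstoD(2)[OF Q] ep by simp
  then obtain \<delta> where dp: "\<delta> > 0" and dd: "\<forall>y\<in>{t..}. y \<noteq> t \<and> dist y t < \<delta> \<longrightarrow> (h y - h t) / (y - t) < D + \<epsilon>"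
    unfolding eventually_at by blast
  show ?thesis
  proof (intro exI conjI allI impI)
    show "\<delta> > 0" by fact
    fix s assume s: "t < s \<and> s < t + \<delta>"
    then have "(h s - h t) / (s - t) < D + \<epsilon>" using dd by (auto simp: dist_real_def)
    then have "h s - h t < (D + \<epsilon>) * (s - t)" using s by (simp add: divide_less_eq)
    also have "\<dots> \<le> \<epsilon> * (s - t)" using D s by (intro mult_right_mono) auto
    finally show "h s \<le> h t + \<epsilon> * (s - t)" by simp
  qed
qed

lemma exp_decay: "(T::real) > 0 \<Longrightarrow> ((\<lambda>t. C * exp (- t / T)) \<longlongrightarrow> 0) at_top"
  by real_asymp



theorem theorem2:
  fixes n m :: nat and c r :: "nat \<Rightarrow> real" and T eps :: real
    and kappa :: "nat \<Rightarrow> nat \<Rightarrow> real"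
    and qs mus :: "nat \<Rightarrow> real" and Xs :: "nat \<Rightarrow> nat \<Rightarrow> real"
    and q :: "real \<Rightarrow> nat \<Rightarrow> real"
  assumes "n \<ge> 1" and "m \<ge> 1"
    and c_pos: "\<forall>j<n. c j > 0" and "T > 0" and "eps > 0"
    and r_pos: "\<forall>i<m. r i > 0"
    and kappa_nonneg: "\<forall>i<m. \<forall>j<n. kappa i j \<ge> 0"
    and eq_mu: "\<forall>j<n. mus j = price T (c j) (qs j)"
    and eq_X: "\<forall>i<m. \<forall>j<n. Xs i j = r i * logit n eps kappa mus i j"
    and eq_q: "\<forall>j<n. (\<Sum>i<m. Xs i j) = qs j / T"
    and traj: "\<forall>t\<ge>0. \<forall>j<n.
        ((\<lambda>s. q s j) has_real_derivative
           ((\<Sum>i<m. r i * logit n eps kappa (\<lambda>k. price T (c k) (q t k)) i j) - q t j / T))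
        (at t within {0..})"
  shows "(\<forall>j<n. ((\<lambda>t. q t j) \<longlongrightarrow> qs j) at_top)
       \<and> (\<forall>j<n. ((\<lambda>t. price T (c j) (q t j)) \<longlongrightarrow> mus j) at_top)
       \<and> (\<forall>i<m. \<forall>j<n. ((\<lambda>t. r i * logit n eps kappa (\<lambda>k. price T (c k) (q t k)) i j)
                          \<longlongrightarrow> Xs i j) at_top)"
proof -
  note T = \<open>T > 0\<close> and ep = \<open>eps > 0\<close>
  define P where "P t k = price T (c k) (q t k)" for t k
  define lg where "lg t i j = logit n eps kappa (\<lambda>k. price T (c k) (q t k)) i j" for t i j
  define lgs where "lgs i j = logit n eps kappa mus i j" for i j
  define G where "G t j = (\<Sum>i<m. r i * lg t i j) - (\<Sum>i<m. r i * lgs i j)" for t j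
  define e where "e t j = q t j - qs j" for t j
  have Fs: "(\<Sum>i<m. r i * lgs i j) = qs j / T" if "j < n" for j
    using eq_X eq_q that by (simp add: lgs_def)
  have de: "((\<lambda>s. e s j) has_real_derivative G t j - e t j / T) (at t within {0..})"
    if "t \<ge> 0" "j < n" for t j
  proof -
    have "((\<lambda>s. q s j - qs j) has_real_derivative
           ((\<Sum>i<m. r i * lg t i j) - q t j / T) - 0) (at t within {0..})"
      using traj that unfolding lg_def by (intro DERIV_diff DERIV_const) auto
    moreover have "((\<Sum>i<m. r i * lg t i j) - q t j / T) - 0 = G t j - e t j / T"
      using Fs[OF that(2)] unfolding G_def e_def by (simp add: diff_divide_distrib)
    ultimately show ?thesis unfolding e_def by simp
  qed
  have key: "(\<Sum>j<n. sig (e t j) (G t j)) \<le> 0" for t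
  proof -
    have "(\<Sum>j<n. sig (e t j) (G t j)) \<le> (\<Sum>j<n. \<Sum>i<m. r i * sig (e t j) (lg t i j - lgs i j))"
    proof (rule sum_mono)
      fix j assume "j \<in> {..<n}"
      have "G t j = (\<Sum>i<m. r i * (lg t i j - lgs i j))"
        unfolding G_def by (simp add: sum_subtractf right_diff_distrib)
      then have "sig (e t j) (G t j) \<le> (\<Sum>i<m. sig (e t j) (r i * (lg t i j - lgs i j)))"
        using sig_sum[of "{..<m}" "e t j" "\<lambda>i. r i * (lg t i j - lgs i j)"] by simp
      also have "\<dots> = (\<Sum>i<m. r i * sig (e t j) (lg t i j - lgs i j))"
        using r_pos by (intro sum.cong refl sig_scale) auto
      finally show "sig (e t j) (G t j) \<le> (\<Sum>i<m. r i * sig (e t j) (lg t i j - lgs i j))" .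
    qed
    also have "\<dots> = (\<Sum>i<m. r i * (\<Sum>j<n. sig (e t j) (lg t i j - lgs i j)))"
      by (subst sum.swap) (simp add: sum_distrib_left)
    also have "\<dots> \<le> 0"
    proof (rule sum_nonpos)
      fix i assume i: "i \<in> {..<m}"
      define a where "a j = exp (- (kappa i j + P t j) / eps)" for j
      define b where "b j = exp (- (kappa i j + mus j) / eps)" for j
      have "(\<Sum>j<n. sig (e t j) (a j / (\<Sum>k<n. a k) - b j / (\<Sum>k<n. b k))) \<le> 0"
      proof (rule softmax_sig)
        show "\<forall>j<n. a j > 0" "\<forall>j<n. b j > 0" by (auto simp: a_def b_def)
        show "\<forall>j<n. e t j \<le> 0 \<longrightarrow> b j \<le> a j"
        proof (intro allI impI)
          fix j assume j: "j < n" and "e t j \<le> 0"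
          then have "P t j \<le> mus j" using eq_mu c_pos T
            by (auto simp: P_def e_def intro!: price_mono)
          then have "- (kappa i j + mus j) / eps \<le> - (kappa i j + P t j) / eps"
            using ep by (intro divide_right_mono) auto
          then show "b j \<le> a j" by (simp add: a_def b_def)
        qed
        show "\<forall>j<n. e t j \<ge> 0 \<longrightarrow> a j \<le> b j"
        proof (intro allI impI)
          fix j assume j: "j < n" and "e t j \<ge> 0"
          then have "mus j \<le> P t j" using eq_mu c_pos T
            by (auto simp: P_def e_def intro!: price_mono)
          then have "- (kappa i j + P t j) / eps \<le> - (kappa i j + mus j) / eps"
            using ep by (intro divide_right_mono) auto
          then show "a j \<le> b j" by (simp add: a_def b_def)
        qed
      qed
      moreover have "lg t i j = a j / (\<Sum>k<n. a k)" "lgs i j = b j / (\<Sum>k<n. b k)" for j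
        by (simp_all add: lg_def lgs_def logit_def a_def b_def P_def)
      ultimately have "(\<Sum>j<n. sig (e t j) (lg t i j - lgs i j)) \<le> 0" by simp
      then show "r i * (\<Sum>j<n. sig (e t j) (lg t i j - lgs i j)) \<le> 0"
        using r_pos i by (intro mult_nonneg_nonpos) auto
    qed
    finally show ?thesis .
  qed
  define L where "L t = (\<Sum>j<n. \<bar>e t j\<bar>)" for t
  define h where "h t = L t * exp (t / T)" for t
  have dL: "(L has_real_derivative (\<Sum>j<n. sig (e t j) (G t j)) - L t / T) (at t within {t..})"
    if t: "t \<ge> 0" for t
  proof -
    have "((\<lambda>s. \<Sum>j<n. \<bar>e s j\<bar>) has_real_derivative (\<Sum>j<n. sig (e t j) (G t j - e t j / T))) (at t within {t..})"
      using t by (intro DERIV_sum abs_right_deriv DERIV_subset[OF de]) auto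
    moreover have "(\<Sum>j<n. sig (e t j) (G t j - e t j / T)) = (\<Sum>j<n. sig (e t j) (G t j)) - L t / T"
      by (simp add: sig_shift sum_subtractf L_def sum_divide_distrib)
    ultimately show ?thesis by (simp add: L_def[abs_def])
  qed
  have dh: "(h has_real_derivative exp (t / T) * ((\<Sum>j<n. sig (e t j) (G t j)) - L t / T + L t / T)) (at t within {t..})"
    if t: "t \<ge> 0" for t
  proof -
    have "((\<lambda>s. L s * exp (s / T)) has_real_derivative
            ((\<Sum>j<n. sig (e t j) (G t j)) - L t / T) * exp (t / T) + (exp (t / T) * (1 / T)) * L t) (at t within {t..})"
      by (intro DERIV_mult dL t) (use T in \<open>auto intro!: derivative_eq_intros\<close>)
    then show ?thesis unfolding h_def[abs_def] by (simp add: algebra_simps)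
  qed
  have econt: "continuous_on {0..} (\<lambda>s. e s j)" if "j < n" for j
    using de that by (intro DERIV_continuous_on) auto
  have hcont: "continuous_on {0..} h"
    unfolding h_def[abs_def] L_def using econt T by (intro continuous_intros) auto
  have hb: "h b \<le> h 0" if b: "b \<ge> 0" for b
  proof (rule right_mono[OF b])
    show "continuous_on {0..b} h" using hcont by (rule continuous_on_subset) auto
    show "\<forall>t\<in>{0..<b}. \<forall>\<epsilon>>0. \<exists>\<delta>>0. \<forall>s. t < s \<and> s < t + \<delta> \<longrightarrow> h s \<le> h t + \<epsilon> * (s - t)"
    proof (intro ballI allI impI)
      fix t \<epsilon> :: real assume t: "t \<in> {0..<b}" and "\<epsilon> > 0"
      have "exp (t / T) * ((\<Sum>j<n. sig (e t j) (G t j)) - L t / T + L t / T) \<le> 0"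
        using key[of t] by (simp add: mult_nonneg_nonpos)
      then show "\<exists>\<delta>>0. \<forall>s. t < s \<and> s < t + \<delta> \<longrightarrow> h s \<le> h t + \<epsilon> * (s - t)"
        using deriv_loc[OF dh _ \<open>\<epsilon> > 0\<close>] t by auto
    qed
  qed
  have ebound: "\<bar>e t j\<bar> \<le> L 0 * exp (- t / T)" if "t \<ge> 0" "j < n" for t j
  proof -
    have "\<bar>e t j\<bar> \<le> L t" unfolding L_def using that
      by (intro member_le_sum) auto
    also have "L t = h t * exp (- t / T)" by (simp add: h_def exp_minus_inverse mult.assoc flip: exp_add)
    also have "\<dots> \<le> h 0 * exp (- t / T)" using hb[OF that(1)] by (simp add: mult_right_mono)
    also have "h 0 = L 0" by (simp add: h_def)
    finally show ?thesis .
  qed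
  have qlim: "((\<lambda>t. q t j) \<longlongrightarrow> qs j) at_top" if j: "j < n" for j
  proof -
    have "((\<lambda>t. e t j) \<longlongrightarrow> 0) at_top"
      by (rule Lim_null_comparison[OF _ exp_decay[OF T]])
         (use ebound j in \<open>auto intro: eventually_mono[OF eventually_ge_at_top[of 0]]\<close>)
    then have "((\<lambda>t. e t j + qs j) \<longlongrightarrow> 0 + qs j) at_top" by (intro tendsto_intros)
    then show ?thesis by (simp add: e_def)
  qed
  have plim: "((\<lambda>t. price T (c j) (q t j)) \<longlongrightarrow> mus j) at_top" if j: "j < n" for j
  proof -
    have cj: "c j > 0" using c_pos j by simp
    have "((\<lambda>t. T * (1 - c j / max (q t j) (c j))) \<longlongrightarrow> T * (1 - c j / max (qs j) (c j))) at_top"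
      using cj by (intro tendsto_intros qlim j) (auto simp: max_def)
    then show ?thesis using eq_mu j by (simp add: price_alt[OF cj])
  qed
  have llim: "((\<lambda>t. r i * logit n eps kappa (\<lambda>k. price T (c k) (q t k)) i j) \<longlongrightarrow> Xs i j) at_top"
    if i: "i < m" and j: "j < n" for i j
  proof -
    have den: "(\<Sum>k<n. exp (- (kappa i k + mus k) / eps)) \<noteq> 0"
      using \<open>n \<ge> 1\<close> by (intro order.strict_implies_not_eq[symmetric] sum_pos) (auto simp: lessThan_empty_iff eq_commute[of "{}"])
    have "((\<lambda>t. r i * (exp (- (kappa i j + price T (c j) (q t j)) / eps) /
              (\<Sum>k<n. exp (- (kappa i k + price T (c k) (q t k)) / eps))))
          \<longlongrightarrow> r i * (exp (- (kappa i j + mus j) / eps) / (\<Sum>k<n. exp (- (kappa i k + mus k) / eps)))) at_top"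
      using den ep by (intro tendsto_intros plim j) auto
    then show ?thesis using eq_X i j by (simp add: logit_def)
  qed
  show ?thesis using qlim plim llim by blast
qed

end
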